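(* Let $K$ be a field, $\Lambda=\mathrm{diag}(a_1,\dots,a_n)$ with $a_i\in K$, $P=(p_{st})\in GL_n(K)$, and $A=P^{-1}\Lambda P$. Then for each $t=1,\dots,n$, $$\Delta_t(A)=\delta(a_1,\dots,a_n)\,\frac{1}{\det P}\prod_{s=1}^n p_{st},$$ and consequently $$\Delta(A)=\delta(a_1,\dots,a_n)^n\,\frac{1}{(\det P)^n}\prod_{s=1}^n\prod_{t=1}^n p_{st}.$$
   Context: For $A\in M_n(K)$ and $t\in\{1,\dots,n\}$, $M_t(A)$ is the $n\times n$ matrix whose $j$-th column is the $t$-th column of $A^{j-1}$ ($j=1,\dots,n$, $A^0=I$); $\Delta_t(A)=\det M_t(A)$ and $\Delta(A)=\prod_{t=1}^n\Delta_t(A)$. $\delta(x_1,\dots,x_n)=\prod_{s<t}(x_t-x_s)$. *)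

theory Defs
  imports "Jordan_Normal_Form.Determinant"
begin

text \<open>Indices are 0-based: rows/columns 0..n-1 correspond to 1..n in the paper.\<close>

definition krylov_mat :: "nat \<Rightarrow> 'a :: comm_ring_1 mat \<Rightarrow> nat \<Rightarrow> 'a mat" where
  "krylov_mat n A t = Matrix.mat n n (\<lambda>(i,j). (A ^\<^sub>m j) $$ (i,t))"

definition Delta_t :: "nat \<Rightarrow> 'a :: comm_ring_1 mat \<Rightarrow> nat \<Rightarrow> 'a" where
  "Delta_t n A t = det (krylov_mat n A t)"

definition Delta :: "nat \<Rightarrow> 'a :: comm_ring_1 mat \<Rightarrow> 'a" where
  "Delta n A = (\<Prod>t<n. Delta_t n A t)"

definition vandermonde_delta :: "nat \<Rightarrow> (nat \<Rightarrow> 'a :: comm_ring_1) \<Rightarrow> 'a" where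
  "vandermonde_delta n a = (\<Prod>t<n. \<Prod>s<t. a t - a s)"

end

theory Submission
  imports Defs
begin

lemma det_mat_diag: "det (mat_diag n (f :: nat \<Rightarrow> 'a :: comm_ring_1)) = (\<Prod>i<n. f i)"
proof -
  have "det (mat_diag n f) = prod_list (diag_mat (mat_diag n f))"
    by (rule det_upper_triangular[of _ n]) (auto simp: mat_diag_def)
  also have "\<dots> = (\<Prod>i<n. f i)"
    unfolding prod_list_diag_prod by (simp add: mat_diag_def atLeast0LessThan)
  finally show ?thesis .
qed

lemma vdm_delta_Suc:
  "vandermonde_delta (Suc n) (a :: nat \<Rightarrow> 'a :: comm_ring_1)
   = (\<Prod>i<n. a (Suc i) - a 0) * vandermonde_delta n (\<lambda>i. a (Suc i))"
  unfolding vandermonde_delta_def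
  by (simp add: prod.lessThan_Suc_shift prod.distrib del: prod.lessThan_Suc)

lemma sum_E:
  fixes f :: "nat \<Rightarrow> 'a :: comm_ring_1"
  assumes "j < m"
  shows "(\<Sum>i\<in>{0..<m}. f i * (if i = j then 1 else if Suc i = j then c else 0))
       = (if j = 0 then f 0 else f j + c * f (j - 1))"
proof -
  have "(\<Sum>i\<in>{0..<m}. f i * (if i = j then 1 else if Suc i = j then c else 0))
     = (\<Sum>i\<in>{0..<m}. (if i = j then f i else 0)) + (\<Sum>i\<in>{0..<m}. (if i = j - 1 \<and> j \<noteq> 0 then c * f i else 0))"
    unfolding sum.distrib[symmetric] by (rule sum.cong) auto
  also have "\<dots> = (if j = 0 then f 0 else f j + c * f (j - 1))"
    using assms by (cases j) (auto simp: sum.delta)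
  finally show ?thesis .
qed

lemma vdm_det:
  "det (Matrix.mat n n (\<lambda>(k,j). (a :: nat \<Rightarrow> 'a :: comm_ring_1) k ^ j)) = vandermonde_delta n a"
proof (induction n arbitrary: a)
  case 0
  then show ?case by (simp add: vandermonde_delta_def)
next
  case (Suc n)
  define V where "V = Matrix.mat (Suc n) (Suc n) (\<lambda>(k,j). a k ^ j)"
  define E where "E = Matrix.mat (Suc n) (Suc n) (\<lambda>(i,j). if i = j then 1 else if Suc i = j then - a 0 else 0)"
  define W where "W = Matrix.mat (Suc n) (Suc n) (\<lambda>(k,j). if j = 0 then 1 else a k ^ j - a 0 * a k ^ (j - 1))"
  have VC: "V \<in> carrier_mat (Suc n) (Suc n)" and EC: "E \<in> carrier_mat (Suc n) (Suc n)"
    and WC: "W \<in> carrier_mat (Suc n) (Suc n)" by (auto simp: V_def E_def W_def)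
  have dE: "det E = 1"
  proof -
    have "det E = prod_list (diag_mat E)"
      by (rule det_upper_triangular[OF _ EC]) (auto simp: E_def)
    also have "\<dots> = 1" unfolding prod_list_diag_prod by (simp add: E_def)
    finally show ?thesis .
  qed
  have VEW: "V * E = W"
  proof (rule eq_matI)
    fix i j assume i: "i < dim_row W" and j: "j < dim_col W"
    then have ij: "i < Suc n" "j < Suc n" by (auto simp: W_def)
    have "(V * E) $$ (i,j) = (\<Sum>k\<in>{0..<Suc n}. a i ^ k * (if k = j then 1 else if Suc k = j then - a 0 else 0))"
      using ij by (simp add: V_def E_def scalar_prod_def)
    also have "\<dots> = W $$ (i,j)"
      using ij by (subst sum_E) (auto simp: W_def)
    finally show "(V * E) $$ (i,j) = W $$ (i,j)" .
  qed (auto simp: V_def E_def W_def)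
  have "det V = det W" using det_mult[OF VC EC] dE VEW by simp
  also have "det W = (\<Sum>j<Suc n. W $$ (0,j) * cofactor W 0 j)"
    by (rule laplace_expansion_row[OF WC]) simp
  also have "\<dots> = W $$ (0,0) * cofactor W 0 0"
  proof -
    have "(\<Sum>j<Suc n. W $$ (0,j) * cofactor W 0 j) = (\<Sum>j\<in>{0}. W $$ (0,j) * cofactor W 0 j)"
    proof (rule sum.mono_neutral_right)
      show "\<forall>j\<in>{..<Suc n} - {0}. W $$ (0, j) * cofactor W 0 j = 0"
      proof
        fix j assume "j \<in> {..<Suc n} - {0}"
        then obtain j' where "j = Suc j'" "j < Suc n" by (cases j) auto
        then show "W $$ (0, j) * cofactor W 0 j = 0" by (simp add: W_def)
      qed
    qed auto
    then show ?thesis by simp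
  qed
  also have "\<dots> = det (mat_delete W 0 0)" by (simp add: W_def cofactor_def)
  also have "mat_delete W 0 0 = mat_diag n (\<lambda>i. a (Suc i) - a 0) * Matrix.mat n n (\<lambda>(k,j). a (Suc k) ^ j)"
    by (subst mat_diag_mult_left[of _ n n]) (auto simp: mat_delete_def W_def algebra_simps intro!: eq_matI)
  also have "det \<dots> = (\<Prod>i<n. a (Suc i) - a 0) * vandermonde_delta n (\<lambda>i. a (Suc i))"
    by (subst det_mult[of _ n]) (auto simp: det_mat_diag Suc.IH)
  finally show ?case by (simp add: V_def vdm_delta_Suc)
qed

lemma assoc5:
  fixes Q :: "'a :: comm_ring_1 mat"
  assumes "Q \<in> carrier_mat n n" "X \<in> carrier_mat n n" "P \<in> carrier_mat n n" "Y \<in> carrier_mat n n"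
    "P * Q = 1\<^sub>m n"
  shows "Q * X * P * (Q * Y * P) = Q * (X * Y) * P"
proof -
  note C = assms(1-4)
  have QX: "Q * X \<in> carrier_mat n n" using C by simp
  have QY: "Q * Y \<in> carrier_mat n n" using C by simp
  have QYP: "Q * Y * P \<in> carrier_mat n n" using C by simp
  have YP: "Y * P \<in> carrier_mat n n" using C by simp
  have e1: "Q * Y * P = Q * (Y * P)" by (rule assoc_mult_mat[OF C(1) C(4) C(3)])
  have "Q * X * P * (Q * Y * P) = Q * X * (P * (Q * (Y * P)))"
    unfolding e1 by (rule assoc_mult_mat[OF QX C(3) mult_carrier_mat[OF C(1) YP]])
  also have "P * (Q * (Y * P)) = (P * Q) * (Y * P)" by (rule assoc_mult_mat[OF C(3) C(1) YP, symmetric])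
  also have "\<dots> = Y * P" using YP assms(5) by (simp add: left_mult_one_mat[OF YP])
  also have "Q * X * (Y * P) = Q * X * Y * P" by (rule assoc_mult_mat[OF QX C(4) C(3), symmetric])
  also have "Q * X * Y = Q * (X * Y)" by (rule assoc_mult_mat[OF C(1) C(2) C(4)])
  finally show ?thesis .
qed

theorem mainTheorem4:
  fixes a :: "nat \<Rightarrow> 'a :: field" and P Q :: "'a mat" and n :: nat
  assumes "P \<in> carrier_mat n n" and "Q \<in> carrier_mat n n"
    and "Q * P = 1\<^sub>m n" and "P * Q = 1\<^sub>m n"
  shows "(\<forall>t<n. Delta_t n (Q * mat_diag n a * P) t
            = vandermonde_delta n a * (1 / det P) * (\<Prod>s<n. P $$ (s,t)))
       \<and> Delta n (Q * mat_diag n a * P)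
            = vandermonde_delta n a ^ n * (1 / det P ^ n) * (\<Prod>s<n. \<Prod>t<n. P $$ (s,t))"
proof -
  note PC = assms(1) and QC = assms(2)
  define A where "A = Q * mat_diag n a * P"
  have AC: "A \<in> carrier_mat n n" using PC QC by (auto simp: A_def)
  have pow: "A ^\<^sub>m j = Q * mat_diag n (\<lambda>k. a k ^ j) * P" for j
  proof (induction j)
    case 0
    show ?case using AC assms(3) QC PC by simp
  next
    case (Suc j)
    have "A ^\<^sub>m Suc j = (Q * mat_diag n (\<lambda>k. a k ^ j) * P) * (Q * mat_diag n a * P)"
      using Suc by (simp add: A_def)
    also have "\<dots> = Q * (mat_diag n (\<lambda>k. a k ^ j) * mat_diag n a) * P"
      by (rule assoc5[OF QC _ PC _ assms(4)]) auto
    also have "\<dots> = Q * mat_diag n (\<lambda>k. a k ^ Suc j) * P"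
      by (simp add: mult.commute)
    finally show ?case .
  qed
  have entry: "(Q * mat_diag n g * P) $$ (i,t) = (\<Sum>k\<in>{0..<n}. Q $$ (i,k) * (g k * P $$ (k,t)))"
    if "i < n" "t < n" for g i t
    using that PC QC by (simp add: mat_diag_mult_right[OF QC] scalar_prod_def mult.assoc)
  define V where "V = Matrix.mat n n (\<lambda>(k,j). a k ^ j)"
  have VC: "V \<in> carrier_mat n n" by (simp add: V_def)
  have dQ: "det Q = 1 / det P"
  proof -
    have "det Q * det P = 1" using det_mult[OF QC PC] assms(3) by simp
    moreover then have "det P \<noteq> 0" by auto
    ultimately show ?thesis by (simp add: eq_divide_eq)
  qed
  have one: "Delta_t n A t = vandermonde_delta n a * (1 / det P) * (\<Prod>s<n. P $$ (s,t))"
    if t: "t < n" for t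
  proof -
    have "krylov_mat n A t = Q * (mat_diag n (\<lambda>k. P $$ (k,t)) * V)"
    proof (rule eq_matI)
      fix i j assume "i < dim_row (Q * (mat_diag n (\<lambda>k. P $$ (k,t)) * V))"
        "j < dim_col (Q * (mat_diag n (\<lambda>k. P $$ (k,t)) * V))"
      then have ij: "i < n" "j < n" using QC by (auto simp: V_def)
      have DV: "mat_diag n (\<lambda>k. P $$ (k,t)) * V = Matrix.mat n n (\<lambda>(k,j). P $$ (k,t) * a k ^ j)"
        by (subst mat_diag_mult_left[OF VC]) (auto simp: V_def)
      show "krylov_mat n A t $$ (i,j) = (Q * (mat_diag n (\<lambda>k. P $$ (k,t)) * V)) $$ (i,j)"
        using ij t QC unfolding krylov_mat_def
        unfolding DV by (simp add: pow entry scalar_prod_def mult.commute)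
    qed (use QC in \<open>auto simp: krylov_mat_def V_def\<close>)
    then have "Delta_t n A t = det Q * ((\<Prod>k<n. P $$ (k,t)) * det V)"
      unfolding Delta_t_def using QC VC
      by (simp add: det_mult[OF QC mult_carrier_mat[OF mat_diag_dim VC]] det_mult[OF mat_diag_dim VC] det_mat_diag)
    then show ?thesis using vdm_det[of n a] by (simp add: dQ V_def)
  qed
  have "Delta n A = (\<Prod>t<n. vandermonde_delta n a * (1 / det P) * (\<Prod>s<n. P $$ (s,t)))"
    unfolding Delta_def by (rule prod.cong) (auto simp: one)
  also have "\<dots> = vandermonde_delta n a ^ n * (1 / det P ^ n) * (\<Prod>t<n. \<Prod>s<n. P $$ (s,t))"
    by (simp only: prod.distrib prod_constant power_one_over card_lessThan)
  also have "(\<Prod>t<n. \<Prod>s<n. P $$ (s,t)) = (\<Prod>s<n. \<Prod>t<n. P $$ (s,t))"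
    by (rule prod.swap)
  finally show ?thesis using one unfolding A_def by simp
qed

end
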